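(* Let $I\subset\mathbb{R}$ be an interval, $n\in\mathbb{N}$ and let $f:I\to\mathbb{R}$ be $n$-convex. Fix $k\in\mathbb{N}$ with $k\le n$ and points $x_1<\dots<x_k$ in $I$. Assign to each $x_j$ a multiplicity $l_j\in\mathbb{N}$ ($j=1,\dots,k$) such that $l_1+\dots+l_k=n+1$, and such that $l_1=1$ if $x_1=\inf I$, and $l_k=1$ if $x_k=\sup I$. Let $I_0=(-\infty,x_1)$, $I_j=(x_j,x_{j+1})$ for $j=1,\dots,k-1$, and $I_k=(x_k,\infty)$. Then there exists a polynomial $p\in\Pi_n$ such that $p(x_j)=f(x_j)$ for $j=1,\dots,k$ and $(-1)^{n+1}\bigl(f(x)-p(x)\bigr)\ge 0$ for $x\in I_0\cap I$; $(-1)^{n+1-(l_1+\dots+l_j)}\bigl(f(x)-p(x)\bigr)\ge 0$ for $x\in I_j$, $j=1,\dots,k-1$; $f(x)-p(x)\ge 0$ for $x\in I_k\cap I$.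
   Context: $\Pi_n$ denotes the set of real polynomials of degree at most $n$. Divided differences are defined recursively by $[x_1;f]:=f(x_1)$ and $[x_1,\dots,x_{m+1};f]:=\frac{[x_2,\dots,x_{m+1};f]-[x_1,\dots,x_m;f]}{x_{m+1}-x_1}$ for pairwise distinct points. For $n\in\mathbb{N}$, a function $f:I\to\mathbb{R}$ is called $n$-convex if $[x_1,\dots,x_{n+2};f]\ge 0$ for all pairwise distinct $x_1,\dots,x_{n+2}\in I$. *)

theory Defs
  imports "HOL-Analysis.Analysis" "HOL-Computational_Algebra.Polynomial"
begin

text \<open>The empty list gets the junk value 0 (never used).\<close>
fun divdiff :: "(real \<Rightarrow> real) \<Rightarrow> real list \<Rightarrow> real" where
  "divdiff f [] = 0"
| "divdiff f [x] = f x"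
| "divdiff f (x # y # zs) =
     (divdiff f (y # zs) - divdiff f (butlast (x # y # zs))) / (last (y # zs) - x)"

definition n_convex :: "nat \<Rightarrow> real set \<Rightarrow> (real \<Rightarrow> real) \<Rightarrow> bool" where
  "n_convex n I f \<longleftrightarrow>
     (\<forall>xs. length xs = n + 2 \<longrightarrow> distinct xs \<longrightarrow> set xs \<subseteq> I \<longrightarrow> divdiff f xs \<ge> 0)"

end

theory Submission
  imports Defs
begin

definition ddS :: "(real \<Rightarrow> real) \<Rightarrow> real set \<Rightarrow> real" where
  "ddS f A = (\<Sum>x\<in>A. f x / (\<Prod>y\<in>A-{x}. (x - y)))"

lemma ddS_insert:
  assumes "finite C" "a \<notin> C"
  shows "ddS f (insert a C) = f a / (\<Prod>y\<in>C. a - y) + (\<Sum>x\<in>C. f x / ((x - a) * (\<Prod>y\<in>C-{x}. x - y)))"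
proof -
  have "insert a C - {a} = C" using assms by auto
  moreover have "(\<Sum>x\<in>C. f x / (\<Prod>y\<in>insert a C-{x}. (x - y))) = (\<Sum>x\<in>C. f x / ((x - a) * (\<Prod>y\<in>C-{x}. x - y)))"
  proof (rule sum.cong)
    fix x assume "x \<in> C"
    then have "insert a C - {x} = insert a (C - {x})" using assms by auto
    then show "f x / (\<Prod>y\<in>insert a C-{x}. (x - y)) = f x / ((x - a) * (\<Prod>y\<in>C-{x}. x - y))"
      using assms by simp
  qed simp
  ultimately show ?thesis unfolding ddS_def using assms by simp
qed

lemma ddS_single: "ddS f {a} = f a" by (simp add: ddS_def)

lemma ddS_cong: "(\<And>x. x \<in> A \<Longrightarrow> f x = g x) \<Longrightarrow> ddS f A = ddS g A"
  unfolding ddS_def by (rule sum.cong) auto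

lemma aux_rec:
  fixes a b Pa Pb S1 S2 S3 Fa Fb :: real
  assumes "a \<noteq> b" "Pa \<noteq> 0" "Pb \<noteq> 0" "(a-b)*S3 = S1 - S2"
  shows "Fa/((a-b)*Pa) + (Fb/((b-a)*Pb) + S3) = ((Fa/Pa + S1) - (Fb/Pb + S2))/(a-b)"
proof -
  have "S3 = (S1 - S2)/(a-b)" using assms by (simp add: field_simps)
  moreover have "Fb / (Pb * (b - a)) = - (Fb / (Pb * (a - b)))"
  proof -
    have "Pb*(b-a) = -(Pb*(a-b))" by (simp add: algebra_simps)
    then show ?thesis by simp
  qed
  ultimately show ?thesis using assms
    by (simp add: add_divide_distrib diff_divide_distrib mult.commute)
qed

lemma ddS_rec:
  assumes "finite A" "a \<in> A" "b \<in> A" "a \<noteq> b"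
  shows "ddS f A = (ddS f (A - {b}) - ddS f (A - {a})) / (a - b)"
proof -
  define C where "C = A - {a, b}"
  have C: "finite C" "a \<notin> C" "b \<notin> C" using assms by (auto simp: C_def)
  have A: "A = insert a (insert b C)" using assms by (auto simp: C_def)
  have Ab: "A - {b} = insert a C" and Aa: "A - {a} = insert b C" using assms by (auto simp: C_def)
  have e1: "ddS f A = f a / ((a - b) * (\<Prod>y\<in>C. a - y)) + (f b / ((b - a) * (\<Prod>y\<in>C. b - y))
     + (\<Sum>x\<in>C. f x / ((x - a) * ((x - b) * (\<Prod>y\<in>C-{x}. x - y)))))"
  proof -
    have "ddS f A = f a / (\<Prod>y\<in>insert b C. a - y) + (\<Sum>x\<in>insert b C. f x / ((x - a) * (\<Prod>y\<in>insert b C-{x}. x - y)))"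
      unfolding A using C assms by (subst ddS_insert) auto
    also have "(\<Sum>x\<in>insert b C. f x / ((x - a) * (\<Prod>y\<in>insert b C-{x}. x - y)))
       = f b / ((b - a) * (\<Prod>y\<in>C. b - y)) + (\<Sum>x\<in>C. f x / ((x - a) * ((x - b) * (\<Prod>y\<in>C-{x}. x - y))))"
    proof -
      have "insert b C - {b} = C" using C by auto
      moreover have "(\<Sum>x\<in>C. f x / ((x - a) * (\<Prod>y\<in>insert b C-{x}. x - y))) = (\<Sum>x\<in>C. f x / ((x - a) * ((x - b) * (\<Prod>y\<in>C-{x}. x - y))))"
      proof (rule sum.cong)
        fix x assume "x \<in> C"
        then have "insert b C - {x} = insert b (C - {x})" using C by auto
        then show "f x / ((x - a) * (\<Prod>y\<in>insert b C-{x}. x - y)) = f x / ((x - a) * ((x - b) * (\<Prod>y\<in>C-{x}. x - y)))"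
          using C by simp
      qed simp
      ultimately show ?thesis using C by simp
    qed
    finally show ?thesis using C by simp
  qed
  have e2: "ddS f (A - {b}) = f a / (\<Prod>y\<in>C. a - y) + (\<Sum>x\<in>C. f x / ((x - a) * (\<Prod>y\<in>C-{x}. x - y)))"
    unfolding Ab using C(1,2) by (rule ddS_insert)
  have e3: "ddS f (A - {a}) = f b / (\<Prod>y\<in>C. b - y) + (\<Sum>x\<in>C. f x / ((x - b) * (\<Prod>y\<in>C-{x}. x - y)))"
    unfolding Aa using C(1,3) by (rule ddS_insert)
  have nz: "\<And>x. x \<in> C \<Longrightarrow> (\<Prod>y\<in>C-{x}. x - y) \<noteq> 0" using C by auto
  have pa: "(\<Prod>y\<in>C. a - y) \<noteq> 0" "(\<Prod>y\<in>C. b - y) \<noteq> 0" using C by auto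
  have "(a - b) * (\<Sum>x\<in>C. f x / ((x - a) * ((x - b) * (\<Prod>y\<in>C-{x}. x - y))))
     = (\<Sum>x\<in>C. f x / ((x - a) * (\<Prod>y\<in>C-{x}. x - y))) - (\<Sum>x\<in>C. f x / ((x - b) * (\<Prod>y\<in>C-{x}. x - y)))"
    unfolding sum_distrib_left sum_subtractf[symmetric]
  proof (rule sum.cong)
    fix x assume x: "x \<in> C"
    then have "x \<noteq> a" "x \<noteq> b" using C by auto
    then have "x - a \<noteq> 0" "x - b \<noteq> 0" by auto
    with nz[OF x] show "(a - b) * (f x / ((x - a) * ((x - b) * (\<Prod>y\<in>C-{x}. x - y)))) =
         f x / ((x - a) * (\<Prod>y\<in>C-{x}. x - y)) - f x / ((x - b) * (\<Prod>y\<in>C-{x}. x - y))"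
      by (simp add: divide_simps) (simp add: algebra_simps)
  qed simp
  then show ?thesis using assms(4) pa unfolding e1 e2 e3
    by (rule aux_rec[rotated 3])
qed

lemma two_elems:
  assumes "finite A" "card A \<ge> 2"
  obtains a b where "a \<in> A" "b \<in> A" "a \<noteq> b"
proof -
  have "A \<noteq> {}" using assms by auto
  then obtain a where a: "a \<in> A" by auto
  have "card (A - {a}) \<ge> 1" using assms a by simp
  then have "A - {a} \<noteq> {}" by (metis card.empty le_zero_eq one_neq_zero)
  then obtain b where "b \<in> A - {a}" by auto
  then show ?thesis using a that by auto
qed

lemma ddS_one_aux: "finite A \<Longrightarrow> card A = Suc (Suc m) \<Longrightarrow> ddS (\<lambda>_. 1) A = 0"
proof (induction m arbitrary: A)
  case 0
  have "card A = 2" using 0(2) by (simp add: numeral_2_eq_2)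
  then obtain a b where ab0: "A = {a, b}" "a \<noteq> b" by (auto simp: card_2_iff)
  then have ab: "a \<in> A" "b \<in> A" "a \<noteq> b" by auto
  have "A - {b} = {a}" "A - {a} = {b}" using ab0 by auto
  then show ?case using ddS_rec[OF 0(1) ab, of "\<lambda>_. 1"] by (simp add: ddS_single)
next
  case (Suc m)
  have "card A \<ge> 2" using Suc(3) by simp
  then obtain a b where ab: "a \<in> A" "b \<in> A" "a \<noteq> b" by (rule two_elems[OF Suc(2)])
  have "card (A - {b}) = Suc (Suc m)" "card (A - {a}) = Suc (Suc m)" using Suc(2,3) ab by simp_all
  then have "ddS (\<lambda>_. 1) (A - {b}) = 0" "ddS (\<lambda>_. 1) (A - {a}) = 0"
    using Suc(1)[of "A - {b}"] Suc(1)[of "A - {a}"] Suc(2) by simp_all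
  then show ?case using ddS_rec[OF Suc(2) ab, of "\<lambda>_. 1"] by simp
qed

lemma ddS_one: "finite A \<Longrightarrow> card A \<ge> 2 \<Longrightarrow> ddS (\<lambda>_. 1) A = 0"
proof -
  assume a: "finite A" "card A \<ge> 2"
  then obtain m where "card A = Suc (Suc m)" by (metis add_2_eq_Suc le_Suc_ex)
  then show ?thesis using ddS_one_aux a by blast
qed

lemma ddS_red:
  assumes "finite B" "B \<noteq> {}" "a \<notin> B"
  shows "ddS f (insert a B) = ddS (\<lambda>y. (f y - f a) / (y - a)) B"
proof -
  have "card B \<ge> 1" using assms by (simp add: Suc_leI card_gt_0_iff)
  then have c: "card (insert a B) \<ge> 2" using assms by simp
  have z: "0 = 1 / (\<Prod>y\<in>B. a - y) + (\<Sum>x\<in>B. 1 / ((x - a) * (\<Prod>y\<in>B-{x}. x - y)))"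
    using ddS_one[OF _ c] ddS_insert[OF assms(1,3), of "\<lambda>_. 1"] assms by simp
  have "ddS (\<lambda>y. (f y - f a) / (y - a)) B = (\<Sum>x\<in>B. (f x - f a) / ((x - a) * (\<Prod>y\<in>B-{x}. x - y)))"
    unfolding ddS_def by (rule sum.cong) auto
  also have "\<dots> = (\<Sum>x\<in>B. f x / ((x - a) * (\<Prod>y\<in>B-{x}. x - y))) - f a * (\<Sum>x\<in>B. 1 / ((x - a) * (\<Prod>y\<in>B-{x}. x - y)))"
    by (simp add: sum_distrib_left diff_divide_distrib sum_subtractf)
  also have "\<dots> = (\<Sum>x\<in>B. f x / ((x - a) * (\<Prod>y\<in>B-{x}. x - y))) + f a / (\<Prod>y\<in>B. a - y)"
  proof -
    have z': "(\<Sum>x\<in>B. 1 / ((x - a) * (\<Prod>y\<in>B-{x}. x - y))) = - (1 / (\<Prod>y\<in>B. a - y))"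
      using z by linarith
    show ?thesis by (simp only: z') simp
  qed
  also have "\<dots> = ddS f (insert a B)"
    unfolding ddS_insert[OF assms(1,3)] by simp
  finally show ?thesis by simp
qed

lemma divdiff_ddS: "distinct xs \<Longrightarrow> xs \<noteq> [] \<Longrightarrow> divdiff f xs = ddS f (set xs)"
proof (induction f xs rule: divdiff.induct)
  case (1 f)
  then show ?case by simp
next
  case (2 f x)
  then show ?case by (simp add: ddS_single)
next
  case (3 f x y zs)
  let ?A = "set (x # y # zs)"
  have l: "last (y # zs) \<in> ?A" "x \<in> ?A" by auto
  have ne: "last (y # zs) \<noteq> x" using 3(3) by (metis distinct.simps(2) last_in_set list.discI)
  have s1: "set (y # zs) = ?A - {x}" using 3(3) by auto
  have s2: "set (butlast (x # y # zs)) = ?A - {last (y # zs)}"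
  proof -
    have e: "butlast (x # y # zs) @ [last (y # zs)] = x # y # zs"
      using append_butlast_last_id[of "x # y # zs"] by simp
    then have "distinct (butlast (x # y # zs) @ [last (y # zs)])" using 3(3) by simp
    then have "last (y # zs) \<notin> set (butlast (x # y # zs))" by simp
    moreover have "?A = set (butlast (x # y # zs)) \<union> set [last (y # zs)]"
      by (metis e set_append)
    ultimately show ?thesis by auto
  qed
  have d1: "distinct (y # zs)" using 3(3) by simp
  have d2: "distinct (butlast (x # y # zs))" using 3(3) distinct_butlast by blast
  have n2: "butlast (x # y # zs) \<noteq> []" by simp
  have "divdiff f (x # y # zs) = (ddS f (?A - {x}) - ddS f (?A - {last (y # zs)})) / (last (y # zs) - x)"
    using 3(1)[OF d1] 3(2)[OF d2 n2] s1 s2 by simp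
  also have "\<dots> = ddS f ?A"
    using ddS_rec[OF _ l ne, of f] by simp
  finally show ?case .
qed

definition convD :: "nat \<Rightarrow> real set \<Rightarrow> (real \<Rightarrow> real) \<Rightarrow> bool" where
  "convD m S g \<longleftrightarrow> (\<forall>A. A \<subseteq> S \<longrightarrow> card A = m + 2 \<longrightarrow> ddS g A \<ge> 0)"

lemma nconv_convD: "n_convex n I f \<Longrightarrow> convD n I f"
  unfolding convD_def n_convex_def
proof (intro allI impI)
  fix A assume h: "\<forall>xs. length xs = n + 2 \<longrightarrow> distinct xs \<longrightarrow> set xs \<subseteq> I \<longrightarrow> 0 \<le> divdiff f xs"
    and A: "A \<subseteq> I" "card A = n + 2"
  then have fin: "finite A" by (intro card_ge_0_finite) (use A in simp)
  let ?xs = "sorted_list_of_set A"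
  have s: "set ?xs = A" and d: "distinct ?xs" and l: "length ?xs = n + 2" using fin A by auto
  have ne: "?xs \<noteq> []" proof assume "?xs = []" then have "length ?xs = 0" by simp then show False using l by simp qed
  have "0 \<le> divdiff f ?xs" using h s d l A(1) by blast
  moreover have "divdiff f ?xs = ddS f A" using divdiff_ddS[OF d ne] s by simp
  ultimately have "0 \<le> divdiff f ?xs" "divdiff f ?xs = ddS f A" by auto
  then show "0 \<le> ddS f A" by simp
qed

lemma convD_red:
  assumes "convD (Suc m) S f" "a \<in> S"
  shows "convD m (S - {a}) (\<lambda>y. (f y - f a) / (y - a))"
  unfolding convD_def
proof (intro allI impI)
  fix A assume A: "A \<subseteq> S - {a}" "card A = m + 2"
  then have fin: "finite A" by (intro card_ge_0_finite) (use A in simp)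
  have ne: "A \<noteq> {}" using A by auto
  have na: "a \<notin> A" using A by auto
  have "insert a A \<subseteq> S" "card (insert a A) = Suc m + 2" using A assms fin na by auto
  then have "ddS f (insert a A) \<ge> 0" using assms(1) unfolding convD_def by blast
  then show "ddS (\<lambda>y. (f y - f a) / (y - a)) A \<ge> 0" using ddS_red[OF fin ne na] by simp
qed

lemma mono_right_lim:
  fixes \<phi> :: "real \<Rightarrow> real"
  assumes av: "a < v" and mono: "\<And>y y'. a < y \<Longrightarrow> y < y' \<Longrightarrow> y' < v \<Longrightarrow> \<phi> y \<le> \<phi> y'"
    and bd: "\<And>y. a < y \<Longrightarrow> y < v \<Longrightarrow> B \<le> \<phi> y"
  shows "\<exists>L. (\<phi> \<longlongrightarrow> L) (at_right a)"
proof -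
  let ?S = "\<phi> ` {a<..<v}"
  define L where "L = Inf ?S"
  have ne: "?S \<noteq> {}" using av by auto
  have bdd: "bdd_below ?S" using bd by (auto intro!: bdd_belowI)
  have "(\<phi> \<longlongrightarrow> L) (at_right a)"
  proof (rule tendstoI)
    fix e :: real assume e: "e > 0"
    have "Inf ?S < L + e" using e L_def by simp
    then obtain y1 where y1: "y1 \<in> {a<..<v}" "\<phi> y1 < L + e"
      using cInf_less_iff[OF ne bdd] by auto
    have "eventually (\<lambda>y. y \<in> {a<..<y1}) (at_right a)"
      using y1 by (intro eventually_at_right_real) auto
    then show "eventually (\<lambda>y. dist (\<phi> y) L < e) (at_right a)"
    proof (rule eventually_mono)
      fix y assume y: "y \<in> {a<..<y1}"
      then have "L \<le> \<phi> y" unfolding L_def using y1 by (intro cInf_lower[OF _ bdd]) auto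
      moreover have "\<phi> y \<le> \<phi> y1" using y y1 by (intro mono) auto
      ultimately show "dist (\<phi> y) L < e" using y1 e by (simp add: dist_real_def)
    qed
  qed
  then show ?thesis by blast
qed

lemma ev_notin:
  fixes B :: "real set"
  assumes "finite B"
  shows "eventually (\<lambda>y. y \<notin> B) (at_right a)"
proof -
  have "\<forall>b\<in>B. eventually (\<lambda>y. y \<noteq> b) (at_right a)"
  proof
    fix b assume "b \<in> B"
    show "eventually (\<lambda>y. y \<noteq> b) (at_right a)"
    proof (cases "b \<le> a")
      case True
      show ?thesis using eventually_at_right_less[of a] by (rule eventually_mono) (use True in auto)
    next
      case False
      then have "a < b" by simp
      show ?thesis using eventually_at_right_real[OF \<open>a < b\<close>] by (rule eventually_mono) auto
    qed
  qed
  then have "eventually (\<lambda>y. \<forall>b\<in>B. y \<noteq> b) (at_right a)"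
    using assms by (rule eventually_ball_finite[rotated])
  then show ?thesis by (rule eventually_mono) auto
qed

lemma ext:
  assumes I: "is_interval I" and u: "u \<in> I" "u < a" and v: "v \<in> I" "a < v"
    and cv: "convD m (I - {a}) g"
  shows "\<exists>c. convD m I (g(a := c))"
proof -
  have inI: "\<And>x. u \<le> x \<Longrightarrow> x \<le> v \<Longrightarrow> x \<in> I" using I u v unfolding is_interval_1 by blast
  have aI: "a \<in> I" using inI u v by simp
  define z where "z i = a - (a - u) * (real i + 1) / (real m + 2)" for i :: nat
  define Z where "Z = z ` {1..m}"
  define y0 where "y0 = z 0"
  have zlt: "u < z i \<and> z i < a" if "i \<le> m" for i
  proof -
    have q1: "(real i + 1) / (real m + 2) < 1" and q2: "0 < (real i + 1) / (real m + 2)" using that by auto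
    have p: "0 < a - u" using u by simp
    have "(a - u) * ((real i + 1) / (real m + 2)) < (a - u) * 1" by (rule mult_strict_left_mono[OF q1 p])
    moreover have "0 < (a - u) * ((real i + 1) / (real m + 2))" by (rule mult_pos_pos[OF p q2])
    ultimately show ?thesis unfolding z_def by (simp add: times_divide_eq_right)
  qed
  have zinj: "inj z"
  proof (rule injI)
    fix i j assume "z i = z j"
    then have "(a - u) * (real i + 1) / (real m + 2) = (a - u) * (real j + 1) / (real m + 2)"
      unfolding z_def by simp
    then have "(a - u) * (real i + 1) = (a - u) * (real j + 1)" by simp
    then show "i = j" using u by simp
  qed
  have finZ: "finite Z" unfolding Z_def by simp
  have "inj_on z {1..m}" using zinj by (rule inj_on_subset) simp
  then have cardZ: "card Z = m" unfolding Z_def by (simp add: card_image)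
  have Zlt: "u < w \<and> w < a" if wZ: "w \<in> Z" for w
  proof -
    obtain i where "i \<in> {1..m}" "w = z i" using wZ unfolding Z_def by blast
    then show ?thesis using zlt[of i] by simp
  qed
  have ZI: "Z \<subseteq> I - {a}"
  proof
    fix w assume "w \<in> Z"
    then have "u < w" "w < a" using Zlt by auto
    then show "w \<in> I - {a}" using inI[of w] v by auto
  qed
  have y0Z: "y0 \<notin> Z"
  proof
    assume "y0 \<in> Z"
    then obtain i where i: "i \<in> {1..m}" "z 0 = z i" unfolding Z_def y0_def by blast
    then have "0 = i" using injD[OF zinj] by blast
    then show False using i by simp
  qed
  have y0: "u < y0" "y0 < a" using zlt[of 0] unfolding y0_def by auto
  have y0I: "y0 \<in> I - {a}" using y0 inI v by auto
  define \<phi> where "\<phi> y = ddS g (insert y Z)" for y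
  have mono: "\<phi> y \<le> \<phi> y'" if yy: "y < y'" "y \<in> I - {a}" "y' \<in> I - {a}" "y \<notin> Z" "y' \<notin> Z" for y y'
  proof -
    define A where "A = insert y (insert y' Z)"
    have finA: "finite A" using finZ A_def by simp
    have "card A = m + 2" using yy finZ cardZ unfolding A_def by simp
    moreover have "A \<subseteq> I - {a}" using yy ZI unfolding A_def by auto
    ultimately have ge: "ddS g A \<ge> 0" using cv unfolding convD_def by blast
    have "y' \<in> A" "y \<in> A" "y' \<noteq> y" using yy unfolding A_def by auto
    from ddS_rec[OF finA this, of g]
    have "ddS g A = (ddS g (A - {y}) - ddS g (A - {y'})) / (y' - y)" .
    moreover have "A - {y} = insert y' Z" "A - {y'} = insert y Z" using yy unfolding A_def by auto
    ultimately have "(\<phi> y' - \<phi> y) / (y' - y) \<ge> 0" using ge unfolding \<phi>_def by simp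
    then show ?thesis using yy by (simp add: zero_le_divide_iff)
  qed
  have inav: "y \<in> I - {a}" "y \<notin> Z" if "a < y" "y < v" for y
  proof -
    show "y \<in> I - {a}" using that inI[of y] u by auto
    show "y \<notin> Z" using that Zlt[of y] by auto
  qed
  obtain L where L: "(\<phi> \<longlongrightarrow> L) (at_right a)"
  proof -
    have "\<exists>L. (\<phi> \<longlongrightarrow> L) (at_right a)"
    proof (rule mono_right_lim[OF v(2)])
      fix y y' assume "a < y" "y < y'" "y' < v"
      then show "\<phi> y \<le> \<phi> y'" using inav[of y] inav[of y'] by (intro mono) auto
    next
      fix y assume "a < y" "y < v"
      then show "\<phi> y0 \<le> \<phi> y" using inav[of y] y0 y0I y0Z by (intro mono) auto
    qed
    then show ?thesis using that by blast
  qed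
  define \<omega> where "\<omega> y = (\<Prod>w\<in>Z. y - w)" for y
  define S where "S y = (\<Sum>x\<in>Z. g x / ((x - y) * (\<Prod>w\<in>Z-{x}. x - w)))" for y
  have newton: "g y = \<omega> y * (\<phi> y - S y)" if "a < y" "y < v" for y
  proof -
    have yZ: "y \<notin> Z" using inav that by auto
    have "\<phi> y = g y / \<omega> y + S y" unfolding \<phi>_def \<omega>_def S_def using ddS_insert[OF finZ yZ] by simp
    moreover have "\<omega> y \<noteq> 0" unfolding \<omega>_def using yZ finZ by auto
    ultimately show ?thesis by (simp add: field_simps)
  qed
  define c where "c = \<omega> a * (L - S a)"
  have lim1: "((\<lambda>y. \<omega> y * (\<phi> y - S y)) \<longlongrightarrow> c) (at_right a)"
    unfolding c_def \<omega>_def S_def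
  proof (intro tendsto_intros L)
    fix x assume x: "x \<in> Z"
    then have "x \<noteq> a" using Zlt by fastforce
    moreover have "(\<Prod>w\<in>Z-{x}. x - w) \<noteq> 0" using finZ by auto
    ultimately show "(x - a) * (\<Prod>w\<in>Z-{x}. x - w) \<noteq> 0" by simp
  qed
  have glim: "(g \<longlongrightarrow> c) (at_right a)"
  proof -
    have "eventually (\<lambda>y. \<omega> y * (\<phi> y - S y) = g y) (at_right a)"
      using eventually_at_right_real[OF v(2)] by (rule eventually_mono) (use newton in auto)
    from tendsto_cong[OF this] lim1 show ?thesis by (rule iffD1)
  qed
  have "convD m I (g(a := c))"
    unfolding convD_def
  proof (intro allI impI)
    fix A assume A: "A \<subseteq> I" "card A = m + 2"
    then have finA: "finite A" by (intro card_ge_0_finite) (use A in simp)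
    show "ddS (g(a := c)) A \<ge> 0"
    proof (cases "a \<in> A")
      case False
      then have "ddS (g(a := c)) A = ddS g A" by (intro ddS_cong) auto
      moreover have "ddS g A \<ge> 0" using cv A False unfolding convD_def by blast
      ultimately show ?thesis by simp
    next
      case True
      define B where "B = A - {a}"
      have finB: "finite B" and aB: "a \<notin> B" and AB: "A = insert a B" using finA True unfolding B_def by auto
      have BI: "B \<subseteq> I - {a}" using A unfolding B_def by auto
      have cardB: "card B = m + 1" using A True finA unfolding B_def by simp
      define F where "F y = g y / (\<Prod>w\<in>B. y - w) + (\<Sum>x\<in>B. g x / ((x - y) * (\<Prod>w\<in>B-{x}. x - w)))" for y
      have val: "ddS (g(a := c)) A = c / (\<Prod>w\<in>B. a - w) + (\<Sum>x\<in>B. g x / ((x - a) * (\<Prod>w\<in>B-{x}. x - w)))"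
      proof -
        have "ddS (g(a := c)) A = c / (\<Prod>w\<in>B. a - w) + (\<Sum>x\<in>B. (g(a := c)) x / ((x - a) * (\<Prod>w\<in>B-{x}. x - w)))"
          unfolding AB using ddS_insert[OF finB aB] by simp
        also have "(\<Sum>x\<in>B. (g(a := c)) x / ((x - a) * (\<Prod>w\<in>B-{x}. x - w))) = (\<Sum>x\<in>B. g x / ((x - a) * (\<Prod>w\<in>B-{x}. x - w)))"
          using aB by (intro sum.cong) auto
        finally show ?thesis .
      qed
      have limF: "(F \<longlongrightarrow> c / (\<Prod>w\<in>B. a - w) + (\<Sum>x\<in>B. g x / ((x - a) * (\<Prod>w\<in>B-{x}. x - w)))) (at_right a)"
        unfolding F_def
      proof (intro tendsto_intros glim)
        show "(\<Prod>w\<in>B. a - w) \<noteq> 0" using finB aB by auto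
      next
        fix x assume x: "x \<in> B"
        then have "x \<noteq> a" using aB by auto
        moreover have "(\<Prod>w\<in>B-{x}. x - w) \<noteq> 0" using finB by auto
        ultimately show "(x - a) * (\<Prod>w\<in>B-{x}. x - w) \<noteq> 0" by simp
      qed
      have evF: "eventually (\<lambda>y. 0 \<le> F y) (at_right a)"
      proof -
        have "eventually (\<lambda>y. y \<in> {a<..<v} \<and> y \<notin> B) (at_right a)"
          using eventually_at_right_real[OF v(2)] ev_notin[OF finB] by (rule eventually_conj)
        then show ?thesis
        proof (rule eventually_mono)
          fix y assume y: "y \<in> {a<..<v} \<and> y \<notin> B"
          then have "insert y B \<subseteq> I - {a}" "card (insert y B) = m + 2"
            using inav[of y] BI cardB finB by auto
          then have "ddS g (insert y B) \<ge> 0" using cv unfolding convD_def by blast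
          then show "0 \<le> F y" unfolding F_def using ddS_insert[OF finB, of y g] y by simp
        qed
      qed
      have "0 \<le> c / (\<Prod>w\<in>B. a - w) + (\<Sum>x\<in>B. g x / ((x - a) * (\<Prod>w\<in>B-{x}. x - w)))"
        using tendsto_lowerbound[OF limF evF] by simp
      then show ?thesis using val by simp
    qed
  qed
  then show ?thesis by blast
qed

lemma omega_split:
  fixes J :: "nat set" and x :: "nat \<Rightarrow> real" and y :: real and l l' :: "nat \<Rightarrow> nat"
  assumes "finite J" "j0 \<in> J" "l j0 \<ge> 1"
    and J': "(l j0 \<ge> 2 \<and> J' = J \<and> l' = l(j0 := l j0 - 1)) \<or> (l j0 = 1 \<and> J' = J - {j0} \<and> l' = l)"
  shows "(\<Prod>j\<in>J. (y - x j) ^ l j) = (y - x j0) * (\<Prod>j\<in>J'. (y - x j) ^ l' j)"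
proof -
  have r: "(\<Prod>j\<in>J. h j) = h j0 * (\<Prod>j\<in>J - {j0}. h j)" for h :: "nat \<Rightarrow> real"
    using assms(1,2) by (rule prod.remove)
  have c: "(\<Prod>j\<in>J - {j0}. (y - x j) ^ l' j) = (\<Prod>j\<in>J - {j0}. (y - x j) ^ l j)"
    using J' by (intro prod.cong) auto
  show ?thesis
  proof (cases "l j0 \<ge> 2")
    case True
    then have e: "J' = J" "l' = l(j0 := l j0 - 1)" using J' by auto
    have "(y - x j0) ^ l j0 = (y - x j0) * (y - x j0) ^ (l j0 - 1)"
      using assms(3) by (metis Suc_diff_le diff_Suc_1 power_Suc)
    then show ?thesis unfolding r[of "\<lambda>j. (y - x j) ^ l j"] e(1) r[of "\<lambda>j. (y - x j) ^ l' j"]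
      using c e by simp
  next
    case False
    then have e: "J' = J - {j0}" "l' = l" "l j0 = 1" using J' by auto
    show ?thesis unfolding r[of "\<lambda>j. (y - x j) ^ l j"] e by simp
  qed
qed

lemma combine:
  fixes J J' :: "nat set" and x :: "nat \<Rightarrow> real" and a :: real and l l' :: "nat \<Rightarrow> nat"
    and f :: "real \<Rightarrow> real" and q :: "real poly" and I :: "real set"
  assumes fin: "finite J" and j0: "j0 \<in> J" and a: "a = x j0" and inj: "inj_on x J" and l1: "l j0 \<ge> 1"
    and J': "(l j0 \<ge> 2 \<and> J' = J \<and> l' = l(j0 := l j0 - 1)) \<or> (l j0 = 1 \<and> J' = J - {j0} \<and> l' = l)"
    and dq: "degree q \<le> n"
    and iq: "\<forall>j\<in>J'. x j \<noteq> a \<longrightarrow> poly q (x j) = (f (x j) - f a) / (x j - a)"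
    and sq: "\<forall>y\<in>I. y \<noteq> a \<longrightarrow> 0 \<le> (\<Prod>j\<in>J'. (y - x j) ^ l' j) * ((f y - f a) / (y - a) - poly q y)"
  shows "\<exists>p. degree p \<le> Suc n \<and> (\<forall>j\<in>J. poly p (x j) = f (x j))
           \<and> (\<forall>y\<in>I. 0 \<le> (\<Prod>j\<in>J. (y - x j) ^ l j) * (f y - poly p y))"
proof -
  define p where "p = [:f a:] + [:-a, 1:] * q"
  have pv: "poly p y = f a + (y - a) * poly q y" for y unfolding p_def by (simp add: algebra_simps)
  have "degree p \<le> Suc n"
  proof -
    have "degree ([:-a, 1:] * q) \<le> degree [:-a, 1:] + degree q" by (rule degree_mult_le)
    also have "\<dots> \<le> Suc n" using dq by simp
    finally have "degree ([:-a, 1:] * q) \<le> Suc n" .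
    then show ?thesis unfolding p_def using degree_add_le[of "[:f a:]" "Suc n" "[:-a, 1:] * q"] by simp
  qed
  moreover have "\<forall>j\<in>J. poly p (x j) = f (x j)"
  proof
    fix j assume j: "j \<in> J"
    show "poly p (x j) = f (x j)"
    proof (cases "x j = a")
      case True then show ?thesis using pv by simp
    next
      case False
      then have "j \<noteq> j0" using a by auto
      then have "j \<in> J'" using J' j by auto
      then have "poly q (x j) = (f (x j) - f a) / (x j - a)" using iq False by auto
      then show ?thesis using pv False by simp
    qed
  qed
  moreover have "\<forall>y\<in>I. 0 \<le> (\<Prod>j\<in>J. (y - x j) ^ l j) * (f y - poly p y)"
  proof
    fix y assume y: "y \<in> I"
    have om: "(\<Prod>j\<in>J. (y - x j) ^ l j) = (y - a) * (\<Prod>j\<in>J'. (y - x j) ^ l' j)"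
      using omega_split[OF fin j0 l1 J'] a by simp
    show "0 \<le> (\<Prod>j\<in>J. (y - x j) ^ l j) * (f y - poly p y)"
    proof (cases "y = a")
      case True then show ?thesis using om by simp
    next
      case False
      have e: "f y - poly p y = (y - a) * ((f y - f a) / (y - a) - poly q y)"
        using False unfolding pv by (simp add: field_simps)
      have "(\<Prod>j\<in>J. (y - x j) ^ l j) * (f y - poly p y)
          = (y - a)^2 * ((\<Prod>j\<in>J'. (y - x j) ^ l' j) * ((f y - f a) / (y - a) - poly q y))"
        unfolding om e power2_eq_square by (simp only: mult_ac)
      also have "\<dots> \<ge> 0" using sq y False by simp
      finally show ?thesis by simp
    qed
  qed
  ultimately show ?thesis by blast
qed

lemma interval_remove:
  fixes I :: "real set"
  assumes I: "is_interval I" and side: "(\<forall>u\<in>I. a \<le> u) \<or> (\<forall>v\<in>I. v \<le> a)"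
  shows "is_interval (I - {a})"
  unfolding is_interval_1
proof (intro ballI allI impI)
  fix p q t assume p: "p \<in> I - {a}" and q: "q \<in> I - {a}" and t: "p \<le> t \<and> t \<le> q"
  then have "t \<in> I" using I unfolding is_interval_1 by blast
  moreover have "t \<noteq> a"
  proof
    assume ta: "t = a"
    from side show False
    proof
      assume "\<forall>u\<in>I. a \<le> u"
      then have "a \<le> p" using p by auto
      then show False using p t ta by auto
    next
      assume "\<forall>v\<in>I. v \<le> a"
      then have "q \<le> a" using q by auto
      then show False using q t ta by auto
    qed
  qed
  ultimately show "t \<in> I - {a}" by simp
qed

lemma main:
  fixes x :: "nat \<Rightarrow> real" and l :: "nat \<Rightarrow> nat" and J :: "nat set" and I :: "real set"
    and f :: "real \<Rightarrow> real"
  shows "is_interval I \<Longrightarrow> convD n I f \<Longrightarrow> finite J \<Longrightarrow> inj_on x J \<Longrightarrow> x ` J \<subseteq> I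
    \<Longrightarrow> (\<forall>j\<in>J. 1 \<le> l j) \<Longrightarrow> (\<Sum>j\<in>J. l j) = n + 1
    \<Longrightarrow> (\<forall>j\<in>J. 2 \<le> l j \<longrightarrow> (\<exists>u\<in>I. u < x j) \<and> (\<exists>v\<in>I. x j < v))
    \<Longrightarrow> \<exists>p. degree p \<le> n \<and> (\<forall>j\<in>J. poly p (x j) = f (x j))
          \<and> (\<forall>y\<in>I. 0 \<le> (\<Prod>j\<in>J. (y - x j) ^ l j) * (f y - poly p y))"
proof (induction n arbitrary: f I J l)
  case 0
  have "J \<noteq> {}" using "0.prems"(7) by auto
  then obtain j0 where j0: "j0 \<in> J" by auto
  have "(\<Sum>j\<in>J. l j) = l j0 + (\<Sum>j\<in>J - {j0}. l j)" using "0.prems"(3) j0 by (rule sum.remove)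
  then have s: "l j0 + (\<Sum>j\<in>J - {j0}. l j) = 1" using "0.prems"(7) by simp
  have l1: "l j0 = 1" using s "0.prems"(6) j0 by fastforce
  have "(\<Sum>j\<in>J - {j0}. l j) = 0" using s l1 by simp
  then have "\<forall>j\<in>J - {j0}. l j = 0" using "0.prems"(3) by simp
  then have "J - {j0} = {}" using "0.prems"(6) by (metis DiffD1 ex_in_conv not_one_le_zero)
  then have Jj: "J = {j0}" using j0 by auto
  define a where "a = x j0"
  have aI: "a \<in> I" using "0.prems"(5) j0 a_def by auto
  define p where "p = [:f a:]"
  have "\<forall>y\<in>I. 0 \<le> (\<Prod>j\<in>J. (y - x j) ^ l j) * (f y - poly p y)"
  proof
    fix y assume y: "y \<in> I"
    show "0 \<le> (\<Prod>j\<in>J. (y - x j) ^ l j) * (f y - poly p y)"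
    proof (cases "y = a")
      case True then show ?thesis using Jj l1 a_def by simp
    next
      case False
      have "insert a {y} \<subseteq> I" "card (insert a {y}) = 0 + 2" using False aI y by auto
      then have "ddS f (insert a {y}) \<ge> 0" using "0.prems"(2) unfolding convD_def by blast
      then have g: "(f y - f a) / (y - a) \<ge> 0" using ddS_red[of "{y}" a f] False by (simp add: ddS_single)
      have "(\<Prod>j\<in>J. (y - x j) ^ l j) * (f y - poly p y) = (y - a)^2 * ((f y - f a) / (y - a))"
        using Jj l1 a_def False by (simp add: p_def power2_eq_square field_simps)
      also have "\<dots> \<ge> 0" using g by (intro mult_nonneg_nonneg) auto
      finally show ?thesis by simp
    qed
  qed
  moreover have "\<forall>j\<in>J. poly p (x j) = f (x j)" using Jj a_def p_def by simp
  moreover have "degree p \<le> 0" unfolding p_def by simp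
  ultimately show ?case by blast
next
  case (Suc n)
  note P = Suc.prems
  have "J \<noteq> {}" using P(7) by auto
  then obtain j0 where j0: "j0 \<in> J" by auto
  define a where "a = x j0"
  have aI: "a \<in> I" using P(5) j0 a_def by auto
  define g where "g y = (f y - f a) / (y - a)" for y
  have cg: "convD n (I - {a}) g" unfolding g_def by (rule convD_red[OF P(2) aI])
  have l1: "l j0 \<ge> 1" using P(6) j0 by auto
  define J' where "J' = (if l j0 \<ge> 2 then J else J - {j0})"
  define l' where "l' = (if l j0 \<ge> 2 then l(j0 := l j0 - 1) else l)"
  have Jc: "(l j0 \<ge> 2 \<and> J' = J \<and> l' = l(j0 := l j0 - 1)) \<or> (l j0 = 1 \<and> J' = J - {j0} \<and> l' = l)"
    using l1 unfolding J'_def l'_def by auto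
  have sr: "(\<Sum>j\<in>J. h j) = h j0 + (\<Sum>j\<in>J - {j0}. h j)" for h :: "nat \<Rightarrow> nat"
    using P(3) j0 by (rule sum.remove)
  have sum': "(\<Sum>j\<in>J'. l' j) = n + 1"
  proof (cases "l j0 \<ge> 2")
    case True
    have "(\<Sum>j\<in>J'. l' j) = (l j0 - 1) + (\<Sum>j\<in>J - {j0}. l j)"
      unfolding J'_def l'_def using True sr[of "l(j0 := l j0 - 1)"] by simp
    then show ?thesis using sr[of l] P(7) True by simp
  next
    case False
    then have "l j0 = 1" using l1 by simp
    then show ?thesis unfolding J'_def l'_def using False sr[of l] P(7) by simp
  qed
  have finJ': "finite J'" using P(3) unfolding J'_def by simp
  have JJ': "J' \<subseteq> J" unfolding J'_def by auto
  have injJ': "inj_on x J'" using P(4) JJ' by (rule inj_on_subset)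
  have xJ': "x ` J' \<subseteq> I" using P(5) JJ' by auto
  have l'1: "\<forall>j\<in>J'. 1 \<le> l' j" using P(6) JJ' unfolding l'_def by auto
  have l'le: "\<forall>j\<in>J'. l' j \<le> l j" unfolding l'_def by auto
  have "\<exists>q. degree q \<le> n \<and> (\<forall>j\<in>J'. x j \<noteq> a \<longrightarrow> poly q (x j) = g (x j))
          \<and> (\<forall>y\<in>I. y \<noteq> a \<longrightarrow> 0 \<le> (\<Prod>j\<in>J'. (y - x j) ^ l' j) * (g y - poly q y))"
  proof (cases "(\<exists>u\<in>I. u < a) \<and> (\<exists>v\<in>I. a < v)")
    case True
    then obtain u v where uv: "u \<in> I" "u < a" "v \<in> I" "a < v" by auto
    obtain c where c: "convD n I (g(a := c))" using ext[OF P(1) uv cg] by blast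
    have int': "\<forall>j\<in>J'. 2 \<le> l' j \<longrightarrow> (\<exists>u\<in>I. u < x j) \<and> (\<exists>v\<in>I. x j < v)"
      using P(8) JJ' l'le by fastforce
    obtain q where q: "degree q \<le> n" "\<forall>j\<in>J'. poly q (x j) = (g(a := c)) (x j)"
      "\<forall>y\<in>I. 0 \<le> (\<Prod>j\<in>J'. (y - x j) ^ l' j) * ((g(a := c)) y - poly q y)"
      using Suc.IH[OF P(1) c finJ' injJ' xJ' l'1 sum' int'] by blast
    show ?thesis
    proof (intro exI conjI)
      show "degree q \<le> n" by (rule q(1))
      show "\<forall>j\<in>J'. x j \<noteq> a \<longrightarrow> poly q (x j) = g (x j)" using q(2) by auto
      show "\<forall>y\<in>I. y \<noteq> a \<longrightarrow> 0 \<le> (\<Prod>j\<in>J'. (y - x j) ^ l' j) * (g y - poly q y)"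
        using q(3) by auto
    qed
  next
    case False
    then have side: "(\<forall>u\<in>I. a \<le> u) \<or> (\<forall>v\<in>I. v \<le> a)" by (auto simp: not_less)
    have la: "l j0 = 1"
    proof (rule ccontr)
      assume "l j0 \<noteq> 1"
      then have "2 \<le> l j0" using l1 by simp
      then show False using P(8) j0 False a_def by auto
    qed
    then have e: "J' = J - {j0}" "l' = l" unfolding J'_def l'_def by auto
    have I': "is_interval (I - {a})" by (rule interval_remove[OF P(1) side])
    have xJ'': "x ` J' \<subseteq> I - {a}"
    proof
      fix t assume "t \<in> x ` J'"
      then obtain j where j: "j \<in> J - {j0}" "t = x j" using e by auto
      then have "x j \<noteq> x j0" using P(4) j0 by (metis DiffE inj_on_contraD singletonI)
      then show "t \<in> I - {a}" using j P(5) a_def by auto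
    qed
    have int'': "\<forall>j\<in>J'. 2 \<le> l' j \<longrightarrow> (\<exists>u\<in>I - {a}. u < x j) \<and> (\<exists>v\<in>I - {a}. x j < v)"
    proof (intro ballI impI conjI)
      fix j assume j: "j \<in> J'" and lj: "2 \<le> l' j"
      have xj: "x j \<in> I - {a}" using xJ'' j by auto
      have "j \<in> J" "2 \<le> l j" using j lj e by auto
      then obtain u v where uv: "u \<in> I" "u < x j" "v \<in> I" "x j < v" using P(8) by blast
      have inI: "\<And>t. u \<le> t \<Longrightarrow> t \<le> v \<Longrightarrow> t \<in> I" using P(1) uv unfolding is_interval_1 by blast
      show "\<exists>u\<in>I - {a}. u < x j"
      proof (cases "u = a")
        case False then show ?thesis using uv by auto
      next
        case True
        have "(a + x j) / 2 \<in> I" using inI uv True by auto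
        moreover have "(a + x j) / 2 \<noteq> a" "(a + x j) / 2 < x j" using uv True by auto
        ultimately show ?thesis by (intro bexI[of _ "(a + x j) / 2"]) auto
      qed
      show "\<exists>v\<in>I - {a}. x j < v"
      proof (cases "v = a")
        case False then show ?thesis using uv by auto
      next
        case True
        have "(a + x j) / 2 \<in> I" using inI uv True by auto
        moreover have "(a + x j) / 2 \<noteq> a" "x j < (a + x j) / 2" using uv True by auto
        ultimately show ?thesis by (intro bexI[of _ "(a + x j) / 2"]) auto
      qed
    qed
    obtain q where q: "degree q \<le> n" "\<forall>j\<in>J'. poly q (x j) = g (x j)"
      "\<forall>y\<in>I - {a}. 0 \<le> (\<Prod>j\<in>J'. (y - x j) ^ l' j) * (g y - poly q y)"
      using Suc.IH[OF I' cg finJ' injJ' xJ'' l'1 sum' int''] by blast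
    show ?thesis using q by auto
  qed
  then obtain q where q: "degree q \<le> n" "\<forall>j\<in>J'. x j \<noteq> a \<longrightarrow> poly q (x j) = g (x j)"
          "\<forall>y\<in>I. y \<noteq> a \<longrightarrow> 0 \<le> (\<Prod>j\<in>J'. (y - x j) ^ l' j) * (g y - poly q y)" by blast
  show ?case
    using combine[OF P(3) j0 a_def P(4) l1 Jc q(1)] q(2,3) unfolding g_def by simp
qed

lemma sign_prod:
  fixes x :: "nat \<Rightarrow> real" and J :: "nat set" and l :: "nat \<Rightarrow> nat"
  assumes fin: "finite J" and ne: "\<forall>j\<in>J. y \<noteq> x j"
  shows "0 < (-1::real) ^ (\<Sum>j\<in>{j\<in>J. y < x j}. l j) * (\<Prod>j\<in>J. (y - x j) ^ l j)"
proof -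
  have "(-1::real) ^ (\<Sum>j\<in>{j\<in>J. y < x j}. l j) = (\<Prod>j\<in>{j\<in>J. y < x j}. (-1) ^ l j)"
    by (rule power_sum)
  also have "\<dots> = (\<Prod>j\<in>J. if y < x j then (-1) ^ l j else 1)" by (rule prod.inter_filter[OF fin])
  also have "\<dots> = (\<Prod>j\<in>J. (if y < x j then -1 else 1) ^ l j)" by (rule prod.cong) auto
  finally have "(-1::real) ^ (\<Sum>j\<in>{j\<in>J. y < x j}. l j) * (\<Prod>j\<in>J. (y - x j) ^ l j)
     = (\<Prod>j\<in>J. ((if y < x j then -1 else 1) * (y - x j)) ^ l j)"
    by (simp add: prod.distrib power_mult_distrib)
  also have "\<dots> > 0"
  proof (rule prod_pos)
    fix j assume "j \<in> J"
    then have "y \<noteq> x j" using ne by auto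
    then have "0 < (if y < x j then -1 else 1) * (y - x j)" by auto
    then show "0 < ((if y < x j then -1 else 1) * (y - x j)) ^ l j" by simp
  qed
  finally show ?thesis .
qed

lemma sign_transfer:
  fixes w d :: real
  assumes "0 < (-1::real) ^ N * w" "0 \<le> w * d"
  shows "0 \<le> (-1::real) ^ N * d"
proof -
  have s2: "(-1::real) ^ N * (-1) ^ N = 1" by (simp flip: power_mult_distrib)
  have "((-1::real) ^ N * d) * ((-1) ^ N * w) = ((-1) ^ N * (-1) ^ N) * (w * d)" by (simp only: mult_ac)
  also have "\<dots> = w * d" using s2 by simp
  finally have "((-1::real) ^ N * d) * ((-1) ^ N * w) = w * d" .
  then have "0 \<le> ((-1::real) ^ N * d) * ((-1) ^ N * w)" using assms(2) by linarith
  then show ?thesis using assms(1) by (auto simp: zero_le_mult_iff)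
qed

lemma mono_steps:
  fixes x :: "nat \<Rightarrow> real"
  assumes "\<forall>j\<in>{1..<k}. x j < x (Suc j)" "1 \<le> i" "i + Suc d \<le> k"
  shows "x i < x (i + Suc d)"
  using assms(3)
proof (induction d)
  case 0
  have "i \<in> {1..<k}" using 0 assms(2) by simp
  then have "x i < x (Suc i)" using assms(1) by blast
  then show ?case by simp
next
  case (Suc d)
  have "i + Suc d \<le> k" using Suc.prems by simp
  then have h1: "x i < x (i + Suc d)" by (rule Suc.IH)
  have "i + Suc d \<in> {1..<k}" using Suc.prems assms(2) by simp
  then have "x (i + Suc d) < x (Suc (i + Suc d))" using assms(1) by blast
  then show ?case using h1 by simp
qed

lemma mono_x:
  fixes x :: "nat \<Rightarrow> real"
  assumes "\<forall>j\<in>{1..<k}. x j < x (Suc j)" "1 \<le> i" "i < j" "j \<le> k"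
  shows "x i < x j"
proof -
  obtain d where d0: "j = Suc (i + d)" using less_imp_Suc_add[OF assms(3)] by blast
  then have d: "j = i + Suc d" by simp
  have "i + Suc d \<le> k" using d assms(4) by simp
  then have "x i < x (i + Suc d)" by (rule mono_steps[OF assms(1,2)])
  then show ?thesis using d by simp
qed

theorem theorem1:
  fixes I :: "real set" and n k :: nat and f :: "real \<Rightarrow> real"
    and x :: "nat \<Rightarrow> real" and l :: "nat \<Rightarrow> nat"
  assumes "is_interval I"
    and "n_convex n I f"
    and "k \<le> n"
    and "\<forall>j\<in>{1..k}. x j \<in> I"
    and "\<forall>j\<in>{1..<k}. x j < x (Suc j)"
    and "\<forall>j\<in>{1..k}. l j \<ge> 1"
    and "(\<Sum>j=1..k. l j) = n + 1"
    and "(\<forall>y\<in>I. x 1 \<le> y) \<longrightarrow> l 1 = 1"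
    and "(\<forall>y\<in>I. y \<le> x k) \<longrightarrow> l k = 1"
  shows "\<exists>p :: real poly. degree p \<le> n
           \<and> (\<forall>j\<in>{1..k}. poly p (x j) = f (x j))
           \<and> (\<forall>y\<in>I. y < x 1 \<longrightarrow> (-1::real) ^ (n + 1) * (f y - poly p y) \<ge> 0)
           \<and> (\<forall>j\<in>{1..<k}. \<forall>y. x j < y \<and> y < x (Suc j) \<longrightarrow>
                 (-1::real) ^ (n + 1 - (\<Sum>i=1..j. l i)) * (f y - poly p y) \<ge> 0)
           \<and> (\<forall>y\<in>I. x k < y \<longrightarrow> f y - poly p y \<ge> 0)"
proof -
  note A = assms
  have mx: "\<And>i j. 1 \<le> i \<Longrightarrow> i < j \<Longrightarrow> j \<le> k \<Longrightarrow> x i < x j" using mono_x[OF A(5)] by blast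
  have mxle: "\<And>i j. 1 \<le> i \<Longrightarrow> i \<le> j \<Longrightarrow> j \<le> k \<Longrightarrow> x i \<le> x j"
    using mx by (metis order.order_iff_strict)
  have k1: "1 \<le> k"
  proof (rule ccontr)
    assume "\<not> 1 \<le> k" then have "k = 0" by simp
    then show False using A(7) by simp
  qed
  have inj: "inj_on x {1..k}"
  proof (rule inj_onI)
    fix i j assume ij: "i \<in> {1..k}" "j \<in> {1..k}" "x i = x j"
    show "i = j"
    proof (rule ccontr)
      assume "i \<noteq> j"
      then have "i < j \<or> j < i" by auto
      then show False using mx[of i j] mx[of j i] ij by auto
    qed
  qed
  have cv: "convD n I f" using nconv_convD[OF A(2)] .
  have xI: "x ` {1..k} \<subseteq> I" using A(4) by auto
  have l1: "\<forall>j\<in>{1..k}. 1 \<le> l j" using A(6) by auto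
  have int: "\<forall>j\<in>{1..k}. 2 \<le> l j \<longrightarrow> (\<exists>u\<in>I. u < x j) \<and> (\<exists>v\<in>I. x j < v)"
  proof (intro ballI impI conjI)
    fix j assume j: "j \<in> {1..k}" and lj: "2 \<le> l j"
    show "\<exists>u\<in>I. u < x j"
    proof (cases "j = 1")
      case True
      then have "\<not> (\<forall>y\<in>I. x 1 \<le> y)" using A(8) lj by auto
      then show ?thesis using True by (auto simp: not_le)
    next
      case False
      then have "x 1 < x j" using j by (intro mx) auto
      then show ?thesis using A(4) k1 by auto
    qed
    show "\<exists>v\<in>I. x j < v"
    proof (cases "j = k")
      case True
      then have "\<not> (\<forall>y\<in>I. y \<le> x k)" using A(9) lj by auto
      then show ?thesis using True by (auto simp: not_le)
    next
      case False
      then have "x j < x k" using j by (intro mx) auto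
      then show ?thesis using A(4) k1 by auto
    qed
  qed
  obtain p where p: "degree p \<le> n" "\<forall>j\<in>{1..k}. poly p (x j) = f (x j)"
    "\<forall>y\<in>I. 0 \<le> (\<Prod>j\<in>{1..k}. (y - x j) ^ l j) * (f y - poly p y)"
    using main[OF A(1) cv _ inj xI l1 _ int] A(7) by auto
  let ?w = "\<lambda>y. (\<Prod>j\<in>{1..k}. (y - x j) ^ l j)"
  have part1: "\<forall>y\<in>I. y < x 1 \<longrightarrow> (-1::real) ^ (n + 1) * (f y - poly p y) \<ge> 0"
  proof (intro ballI impI)
    fix y assume y: "y \<in> I" "y < x 1"
    have lt: "\<forall>j\<in>{1..k}. y < x j" using y mxle[of 1] by force
    then have ne: "\<forall>j\<in>{1..k}. y \<noteq> x j" by force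
    have "{j\<in>{1..k}. y < x j} = {1..k}" using lt by auto
    then have "0 < (-1::real) ^ (n + 1) * ?w y" using sign_prod[OF _ ne, of l] A(7) by simp
    then show "(-1::real) ^ (n + 1) * (f y - poly p y) \<ge> 0" using sign_transfer p(3) y by blast
  qed
  have part3: "\<forall>y\<in>I. x k < y \<longrightarrow> f y - poly p y \<ge> 0"
  proof (intro ballI impI)
    fix y assume y: "y \<in> I" "x k < y"
    have lt: "\<forall>j\<in>{1..k}. x j < y" using y mxle[of _ k] by force
    then have ne: "\<forall>j\<in>{1..k}. y \<noteq> x j" by force
    have E: "{j\<in>{1..k}. y < x j} = {}" using lt by force
    have "0 < (-1::real) ^ (\<Sum>j\<in>{j\<in>{1..k}. y < x j}. l j) * ?w y" by (rule sign_prod[OF _ ne]) simp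
    then have "0 < (-1::real) ^ 0 * ?w y" unfolding E by simp
    then have "(-1::real) ^ 0 * (f y - poly p y) \<ge> 0" using sign_transfer p(3) y by blast
    then show "f y - poly p y \<ge> 0" by simp
  qed
  have part2: "\<forall>j\<in>{1..<k}. \<forall>y. x j < y \<and> y < x (Suc j) \<longrightarrow>
                 (-1::real) ^ (n + 1 - (\<Sum>i=1..j. l i)) * (f y - poly p y) \<ge> 0"
  proof (intro ballI allI impI)
    fix j y assume j: "j \<in> {1..<k}" and y: "x j < y \<and> y < x (Suc j)"
    have yI: "y \<in> I"
    proof -
      have "x j \<in> I" "x (Suc j) \<in> I" using A(4) j by auto
      then show ?thesis using A(1) y unfolding is_interval_1 by (meson less_imp_le)
    qed
    have gt: "\<forall>i\<in>{1..j}. x i < y" using y mxle[of _ j] j by force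
    have lt: "\<forall>i\<in>{Suc j..k}. y < x i" using y mxle[of "Suc j"] j by force
    have ne: "\<forall>i\<in>{1..k}. y \<noteq> x i"
    proof
      fix i assume i: "i \<in> {1..k}"
      show "y \<noteq> x i"
      proof (cases "i \<le> j")
        case True then show ?thesis using gt i by force
      next
        case False then show ?thesis using lt i by force
      qed
    qed
    have S: "{i\<in>{1..k}. y < x i} = {Suc j..k}"
    proof
      show "{i\<in>{1..k}. y < x i} \<subseteq> {Suc j..k}"
      proof
        fix i assume i: "i \<in> {i\<in>{1..k}. y < x i}"
        show "i \<in> {Suc j..k}"
        proof (rule ccontr)
          assume "i \<notin> {Suc j..k}"
          then have "i \<in> {1..j}" using i by auto
          then show False using gt i by force
        qed
      qed
      show "{Suc j..k} \<subseteq> {i\<in>{1..k}. y < x i}" using lt j by auto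
    qed
    have split: "(\<Sum>i=1..k. l i) = (\<Sum>i=1..j. l i) + (\<Sum>i=Suc j..k. l i)"
    proof -
      have "{1..k} = {1..j} \<union> {Suc j..k}" using j by auto
      moreover have "{1..j} \<inter> {Suc j..k} = {}" by auto
      ultimately show ?thesis by (simp add: sum.union_disjoint)
    qed
    have N: "n + 1 - (\<Sum>i=1..j. l i) = (\<Sum>i=Suc j..k. l i)" using split A(7) by simp
    have "0 < (-1::real) ^ (\<Sum>i=Suc j..k. l i) * ?w y" using sign_prod[OF _ ne, of l] S by simp
    then have "(-1::real) ^ (\<Sum>i=Suc j..k. l i) * (f y - poly p y) \<ge> 0"
      using sign_transfer p(3) yI by blast
    then show "(-1::real) ^ (n + 1 - (\<Sum>i=1..j. l i)) * (f y - poly p y) \<ge> 0" using N by simp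
  qed
  show ?thesis using p(1,2) part1 part2 part3 by blast
qed

end
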